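(* Let $f:\mathbb{R}^{d_0}\to\mathbb{R}$ be an $L$-layer ReLU network with weights $W^{(i)}\in\mathbb{R}^{d_i\times d_{i-1}}$ and biases $b^{(i)}\in\mathbb{R}^{d_i}$ ($1\le i\le L$, $d_L=1$), defined by $\hat z^{(0)}(x)=x$, $z^{(i)}(x)=W^{(i)}\hat z^{(i-1)}(x)+b^{(i)}$, $\hat z^{(i)}(x)=\mathrm{ReLU}(z^{(i)}(x))$, $f(x)=z^{(L)}(x)$. Let $\mathcal{C}\subseteq\mathbb{R}^{d_0}$ be an input set, let $\mathcal{Z}$ be a set of neuron split constraints given by disjoint index sets $\mathcal{Z}^{+(i)},\mathcal{Z}^{-(i)}\subseteq\{1,\dots,d_i\}$ ($1\le i\le L-1$), and let $l^{(i)}\le z^{(i)}(x)\le u^{(i)}$ be pre-ReLU bounds ($1\le i\le L$) valid for all $x\in\mathcal{C}$ whose pre-activations satisfy the split constraints. Fix any free parameters $\alpha^{(i)}_j\in[0,1]$. Then $$\min_{x\in\mathcal{C},\,z\in\mathcal{Z}} f(x)\;\ge\;\max_{\beta\ge 0}\;\min_{x\in\mathcal{C}}\;(a+P\beta)^\top x+q^\top\beta+c,$$ where $\beta=[\beta^{(1)\top}\ \cdots\ \beta^{(L-1)\top}]^\top$ with $\beta^{(i)}\in\mathbb{R}^{d_i}$, and the quantities $a\in\mathbb{R}^{d_0}$, $P\in\mathbb{R}^{d_0\times\sum_{i=1}^{L-1}d_i}$, $q\in\mathbb{R}^{\sum_{i=1}^{L-1}d_i}$, $c\in\mathbb{R}$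 (which depend on $W^{(i)},b^{(i)},l^{(i)},u^{(i)}$, on $\alpha$ and, through the matrices $D^{(i)}$ and vectors $\underline{b}^{(i)}$ below, on $\beta$) are defined as follows: $$a=\big[\Omega(L,1)W^{(1)}\big]^\top,\qquad P=[P_1^\top\ \cdots\ P_{L-1}^\top],\quad P_i=S^{(i)}\Omega(i,1)W^{(1)}\in\mathbb{R}^{d_i\times d_0},$$ $$q=[q_1^\top\ \cdots\ q_{L-1}^\top]^\top,\quad q_i=\sum_{k=1}^{i}S^{(i)}\Omega(i,k)b^{(k)}+\sum_{k=2}^{i}S^{(i)}\Omega(i,k)W^{(k)}\underline{b}^{(k-1)},$$ $$c=\sum_{i=1}^{L}\Omega(L,i)b^{(i)}+\sum_{i=2}^{L}\Omega(L,i)W^{(i)}\underline{b}^{(i-1)}.$$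
   Context: Split constraints: $z\in\mathcal{Z}$ means $z^{(i)}_j\ge 0$ for all $j\in\mathcal{Z}^{+(i)}$ and $z^{(i)}_j<0$ for all $j\in\mathcal{Z}^{-(i)}$; the left-hand minimum is over $x\in\mathcal{C}$ whose pre-activation vector $z=(z^{(1)}(x),\dots,z^{(L-1)}(x))$ lies in $\mathcal{Z}$. $S^{(i)}\in\mathbb{R}^{d_i\times d_i}$ is diagonal with $S^{(i)}_{j,j}=-1$ if $j\in\mathcal{Z}^{+(i)}$, $+1$ if $j\in\mathcal{Z}^{-(i)}$, and $0$ otherwise. For $1\le i\le k\le L$, $\Omega(i,i)=I$ and $\Omega(k+1,i)=W^{(k+1)}D^{(k)}\Omega(k,i)$. The row vectors $A^{(i)}\in\mathbb{R}^{1\times d_i}$ are defined by $A^{(L-1)}=W^{(L)}$ and $A^{(i)}=(A^{(i+1)}D^{(i+1)}+\beta^{(i+1)\top}S^{(i+1)})W^{(i+1)}$ for $0\le i\le L-2$. For $1\le i\le L-1$, $D^{(i)}$ is diagonal with $D^{(i)}_{j,j}=1$ if $l^{(i)}_j\ge0$ or $j\in\mathcal{Z}^{+(i)}$; $0$ if $u^{(i)}_j\le 0$ or $j\in\mathcal{Z}^{-(i)}$; $\alpha^{(i)}_j$ if $u^{(i)}_j>0>l^{(i)}_j$, $j\notin\mathcal{Z}^{+(i)}\cup\mathcal{Z}^{-(i)}$ and $A^{(i)}_{1,j}\ge 0$; and $\frac{u^{(i)}_j}{u^{(i)}_j-l^{(i)}_j}$ if $u^{(i)}_j>0>l^{(i)}_j$,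 $j\notin\mathcal{Z}^{+(i)}\cup\mathcal{Z}^{-(i)}$ and $A^{(i)}_{1,j}<0$. The vector $\underline{b}^{(i)}$ has $\underline{b}^{(i)}_j=-\frac{u^{(i)}_jl^{(i)}_j}{u^{(i)}_j-l^{(i)}_j}$ if $u^{(i)}_j>0>l^{(i)}_j$, $j\notin\mathcal{Z}^{+(i)}\cup\mathcal{Z}^{-(i)}$ and $A^{(i)}_{1,j}<0$, and $\underline{b}^{(i)}_j=0$ otherwise. (These are computed top-down: $A^{(L-1)}$, then $D^{(L-1)},\underline{b}^{(L-1)}$, then $A^{(L-2)}$, etc.) *)

theory Defs
  imports Complex_Main "HOL-Library.Extended_Real"
begin

(* Conventions: layers are indexed 1..L, neurons of layer i are indexed 0..d i - 1
   (the paper uses 1..d_i).  Vectors are functions nat => real, matrices are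
   functions nat => nat => real (row, column); only entries within the stated
   dimensions are ever used.  W i j k is entry (j,k) of W^(i), b i j entry j of b^(i). *)

definition relu :: "real \<Rightarrow> real" where
  "relu t = max 0 t"

fun zhat :: "(nat \<Rightarrow> nat) \<Rightarrow> (nat \<Rightarrow> nat \<Rightarrow> nat \<Rightarrow> real) \<Rightarrow> (nat \<Rightarrow> nat \<Rightarrow> real)
             \<Rightarrow> nat \<Rightarrow> (nat \<Rightarrow> real) \<Rightarrow> (nat \<Rightarrow> real)" where
  "zhat d W b 0 x = x"
| "zhat d W b (Suc i) x = (\<lambda>j. relu ((\<Sum>k<d i. W (Suc i) j k * zhat d W b i x k) + b (Suc i) j))"

definition zpre :: "(nat \<Rightarrow> nat) \<Rightarrow> (nat \<Rightarrow> nat \<Rightarrow> nat \<Rightarrow> real) \<Rightarrow> (nat \<Rightarrow> nat \<Rightarrow> real)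
             \<Rightarrow> nat \<Rightarrow> (nat \<Rightarrow> real) \<Rightarrow> (nat \<Rightarrow> real)" where
  "zpre d W b i x = (\<lambda>j. (\<Sum>k<d (i - 1). W i j k * zhat d W b (i - 1) x k) + b i j)"

definition net_out :: "nat \<Rightarrow> (nat \<Rightarrow> nat) \<Rightarrow> (nat \<Rightarrow> nat \<Rightarrow> nat \<Rightarrow> real) \<Rightarrow> (nat \<Rightarrow> nat \<Rightarrow> real)
             \<Rightarrow> (nat \<Rightarrow> real) \<Rightarrow> real" where
  "net_out L d W b x = zpre d W b L x 0"

definition split_sat :: "nat \<Rightarrow> (nat \<Rightarrow> nat) \<Rightarrow> (nat \<Rightarrow> nat \<Rightarrow> nat \<Rightarrow> real) \<Rightarrow> (nat \<Rightarrow> nat \<Rightarrow> real)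
             \<Rightarrow> (nat \<Rightarrow> nat set) \<Rightarrow> (nat \<Rightarrow> nat set) \<Rightarrow> (nat \<Rightarrow> real) \<Rightarrow> bool" where
  "split_sat L d W b Zp Zn x =
     (\<forall>i\<in>{1..L-1}. (\<forall>j\<in>Zp i. zpre d W b i x j \<ge> 0) \<and> (\<forall>j\<in>Zn i. zpre d W b i x j < 0))"

definition Sdiag :: "(nat \<Rightarrow> nat set) \<Rightarrow> (nat \<Rightarrow> nat set) \<Rightarrow> nat \<Rightarrow> nat \<Rightarrow> real" where
  "Sdiag Zp Zn i j = (if j \<in> Zp i then -1 else if j \<in> Zn i then 1 else 0)"

(* diagonal entry D^(i)_{j,j}, given the value a = A^(i)_{1,j} *)
definition Dentry :: "(nat \<Rightarrow> nat \<Rightarrow> real) \<Rightarrow> (nat \<Rightarrow> nat \<Rightarrow> real) \<Rightarrow> (nat \<Rightarrow> nat set) \<Rightarrow> (nat \<Rightarrow> nat set)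
             \<Rightarrow> (nat \<Rightarrow> nat \<Rightarrow> real) \<Rightarrow> nat \<Rightarrow> real \<Rightarrow> nat \<Rightarrow> real" where
  "Dentry l u Zp Zn \<alpha> i a j =
     (if l i j \<ge> 0 \<or> j \<in> Zp i then 1
      else if u i j \<le> 0 \<or> j \<in> Zn i then 0
      else if a \<ge> 0 then \<alpha> i j
      else u i j / (u i j - l i j))"

(* entry \<underline>b^(i)_j, given the value a = A^(i)_{1,j} *)
definition bentry :: "(nat \<Rightarrow> nat \<Rightarrow> real) \<Rightarrow> (nat \<Rightarrow> nat \<Rightarrow> real) \<Rightarrow> (nat \<Rightarrow> nat set) \<Rightarrow> (nat \<Rightarrow> nat set)
             \<Rightarrow> nat \<Rightarrow> real \<Rightarrow> nat \<Rightarrow> real" where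
  "bentry l u Zp Zn i a j =
     (if u i j > 0 \<and> 0 > l i j \<and> j \<notin> Zp i \<and> j \<notin> Zn i \<and> a < 0
      then - (u i j * l i j) / (u i j - l i j) else 0)"

(* Atop ... n = A^(L-1-n), computed top-down *)
fun Atop :: "nat \<Rightarrow> (nat \<Rightarrow> nat) \<Rightarrow> (nat \<Rightarrow> nat \<Rightarrow> nat \<Rightarrow> real) \<Rightarrow> (nat \<Rightarrow> nat \<Rightarrow> real) \<Rightarrow> (nat \<Rightarrow> nat \<Rightarrow> real)
             \<Rightarrow> (nat \<Rightarrow> nat set) \<Rightarrow> (nat \<Rightarrow> nat set) \<Rightarrow> (nat \<Rightarrow> nat \<Rightarrow> real) \<Rightarrow> (nat \<Rightarrow> nat \<Rightarrow> real)
             \<Rightarrow> nat \<Rightarrow> nat \<Rightarrow> real" where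
  "Atop L d W l u Zp Zn \<alpha> \<beta> 0 = (\<lambda>j. W L 0 j)"
| "Atop L d W l u Zp Zn \<alpha> \<beta> (Suc n) =
     (\<lambda>j. \<Sum>k<d (L - 1 - n).
        (Atop L d W l u Zp Zn \<alpha> \<beta> n k * Dentry l u Zp Zn \<alpha> (L - 1 - n) (Atop L d W l u Zp Zn \<alpha> \<beta> n k) k
         + \<beta> (L - 1 - n) k * Sdiag Zp Zn (L - 1 - n) k) * W (L - 1 - n) k j)"

definition Arow where
  "Arow L d W l u Zp Zn \<alpha> \<beta> i = Atop L d W l u Zp Zn \<alpha> \<beta> (L - 1 - i)"

definition Dmat where
  "Dmat L d W l u Zp Zn \<alpha> \<beta> i j = Dentry l u Zp Zn \<alpha> i (Arow L d W l u Zp Zn \<alpha> \<beta> i j) j"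

definition blow where
  "blow L d W l u Zp Zn \<alpha> \<beta> i j = bentry l u Zp Zn i (Arow L d W l u Zp Zn \<alpha> \<beta> i j) j"

(* Om ... i n = \<Omega>(i+n, i), a d_(i+n) x d_i matrix *)
fun Om :: "nat \<Rightarrow> (nat \<Rightarrow> nat) \<Rightarrow> (nat \<Rightarrow> nat \<Rightarrow> nat \<Rightarrow> real) \<Rightarrow> (nat \<Rightarrow> nat \<Rightarrow> real) \<Rightarrow> (nat \<Rightarrow> nat \<Rightarrow> real)
             \<Rightarrow> (nat \<Rightarrow> nat set) \<Rightarrow> (nat \<Rightarrow> nat set) \<Rightarrow> (nat \<Rightarrow> nat \<Rightarrow> real) \<Rightarrow> (nat \<Rightarrow> nat \<Rightarrow> real)
             \<Rightarrow> nat \<Rightarrow> nat \<Rightarrow> nat \<Rightarrow> nat \<Rightarrow> real" where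
  "Om L d W l u Zp Zn \<alpha> \<beta> i 0 = (\<lambda>r c. if r = c then 1 else 0)"
| "Om L d W l u Zp Zn \<alpha> \<beta> i (Suc n) =
     (\<lambda>r c. \<Sum>m<d (i + n). W (i + n + 1) r m * Dmat L d W l u Zp Zn \<alpha> \<beta> (i + n) m
                         * Om L d W l u Zp Zn \<alpha> \<beta> i n m c)"

definition Omega where
  "Omega L d W l u Zp Zn \<alpha> \<beta> k i = Om L d W l u Zp Zn \<alpha> \<beta> i (k - i)"

definition avec where
  "avec L d W l u Zp Zn \<alpha> \<beta> j = (\<Sum>m<d 1. Omega L d W l u Zp Zn \<alpha> \<beta> L 1 0 m * W 1 m j)"

definition Pblock where
  "Pblock L d W l u Zp Zn \<alpha> \<beta> i r j =
     Sdiag Zp Zn i r * (\<Sum>m<d 1. Omega L d W l u Zp Zn \<alpha> \<beta> i 1 r m * W 1 m j)"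

definition Pbeta where
  "Pbeta L d W l u Zp Zn \<alpha> \<beta> j =
     (\<Sum>i\<in>{1..L-1}. \<Sum>r<d i. Pblock L d W l u Zp Zn \<alpha> \<beta> i r j * \<beta> i r)"

definition qblock where
  "qblock L d W b l u Zp Zn \<alpha> \<beta> i r =
     (\<Sum>k\<in>{1..i}. Sdiag Zp Zn i r * (\<Sum>m<d k. Omega L d W l u Zp Zn \<alpha> \<beta> i k r m * b k m))
   + (\<Sum>k\<in>{2..i}. Sdiag Zp Zn i r * (\<Sum>m<d k. Omega L d W l u Zp Zn \<alpha> \<beta> i k r m
                        * (\<Sum>p<d (k - 1). W k m p * blow L d W l u Zp Zn \<alpha> \<beta> (k - 1) p)))"

definition qbeta where
  "qbeta L d W b l u Zp Zn \<alpha> \<beta> =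
     (\<Sum>i\<in>{1..L-1}. \<Sum>r<d i. qblock L d W b l u Zp Zn \<alpha> \<beta> i r * \<beta> i r)"

definition cconst where
  "cconst L d W b l u Zp Zn \<alpha> \<beta> =
     (\<Sum>i\<in>{1..L}. \<Sum>m<d i. Omega L d W l u Zp Zn \<alpha> \<beta> L i 0 m * b i m)
   + (\<Sum>i\<in>{2..L}. \<Sum>m<d i. Omega L d W l u Zp Zn \<alpha> \<beta> L i 0 m
                        * (\<Sum>p<d (i - 1). W i m p * blow L d W l u Zp Zn \<alpha> \<beta> (i - 1) p))"

definition bound_obj where
  "bound_obj L d W b l u Zp Zn \<alpha> \<beta> x =
     (\<Sum>j<d 0. (avec L d W l u Zp Zn \<alpha> \<beta> j + Pbeta L d W l u Zp Zn \<alpha> \<beta> j) * x j)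
     + qbeta L d W b l u Zp Zn \<alpha> \<beta> + cconst L d W b l u Zp Zn \<alpha> \<beta>"

end

theory Submission
  imports Defs
begin


lemma swap_lem:
  fixes f :: "nat \<Rightarrow> real"
  shows "(\<Sum>m<M. (\<Sum>c<N. f c * g c m) * t m) = (\<Sum>c<(N::nat). f c * (\<Sum>m<(M::nat). g c m * t m))"
proof -
  have "(\<Sum>m<M. (\<Sum>c<N. f c * g c m) * t m) = (\<Sum>m<M. \<Sum>c<N. f c * (g c m * t m))"
    by (rule sum.cong[OF refl]) (simp only: sum_distrib_right mult.assoc)
  also have "\<dots> = (\<Sum>c<N. \<Sum>m<M. f c * (g c m * t m))" by (rule sum.swap)
  also have "\<dots> = (\<Sum>c<N. f c * (\<Sum>m<M. g c m * t m))" by (simp add: sum_distrib_left)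
  finally show ?thesis .
qed

lemma fid: "(U::real) - Lw \<noteq> 0 \<Longrightarrow> R - U/(U-Lw)*z - - (U*Lw)/(U-Lw) = (R*(U-Lw) - U*(z-Lw))/(U-Lw)"
proof -
  assume ne: "U - Lw \<noteq> 0"
  have 1: "(R*(U-Lw) - U*(z-Lw))/(U-Lw) = R - U*(z-Lw)/(U-Lw)" using ne by (simp add: diff_divide_distrib)
  have 2: "U*(z-Lw)/(U-Lw) = U/(U-Lw)*z - (U*Lw)/(U-Lw)" by (simp add: right_diff_distrib diff_divide_distrib)
  show ?thesis unfolding 1 2 by simp
qed

lemma relax:
  fixes z :: real
  assumes "l i j \<le> z" "z \<le> u i j" "j \<in> Zp i \<Longrightarrow> 0 \<le> z" "j \<in> Zn i \<Longrightarrow> z < 0"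
    "0 \<le> \<alpha> i j" "\<alpha> i j \<le> 1"
  shows "0 \<le> a * (relu z - Dentry l u Zp Zn \<alpha> i a j * z - bentry l u Zp Zn i a j)"
proof -
  consider "l i j \<ge> 0 \<or> j \<in> Zp i" | "\<not>(l i j \<ge> 0 \<or> j \<in> Zp i)" "u i j \<le> 0 \<or> j \<in> Zn i"
    | "\<not>(l i j \<ge> 0 \<or> j \<in> Zp i)" "\<not>(u i j \<le> 0 \<or> j \<in> Zn i)" "a \<ge> 0"
    | "\<not>(l i j \<ge> 0 \<or> j \<in> Zp i)" "\<not>(u i j \<le> 0 \<or> j \<in> Zn i)" "a < 0" by linarith
  then show ?thesis
  proof cases
    case 1
    then have "z \<ge> 0" using assms by auto
    then have "relu z = z" by (simp add: relu_def)
    moreover have "Dentry l u Zp Zn \<alpha> i a j = 1" using 1 by (simp add: Dentry_def)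
    moreover have "bentry l u Zp Zn i a j = 0" using 1 by (auto simp: bentry_def)
    ultimately show ?thesis by simp
  next
    case 2 then show ?thesis using assms by (auto simp: Dentry_def bentry_def relu_def)
  next
    case 3
    have "\<alpha> i j * z \<le> relu z" using assms unfolding relu_def
      by (cases "z \<ge> 0") (auto simp: mult_left_le_one_le mult_nonneg_nonpos intro: mult_left_le_one_le)
    then show ?thesis using 3 assms by (auto simp: Dentry_def bentry_def)
  next
    case 4
    let ?u = "u i j" and ?l = "l i j"
    have ul: "?u > 0" "?l < 0" using 4 by auto
    have key: "relu z * (?u - ?l) \<le> ?u * (z - ?l)"
    proof (cases "z \<ge> 0")
      case True
      have "z * (- ?l) \<le> ?u * (- ?l)" using assms ul by (intro mult_right_mono) auto
      then show ?thesis using True by (simp add: relu_def algebra_simps)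
    next
      case False
      then show ?thesis using assms ul by (simp add: relu_def)
    qed
    have "relu z - ?u / (?u - ?l) * z - - (?u * ?l) / (?u - ?l) = (relu z * (?u - ?l) - ?u * (z - ?l)) / (?u - ?l)"
    proof -
      have ne: "?u - ?l \<noteq> 0" using ul by simp
      show ?thesis
        by (rule fid[OF ne])
    qed
    also have "\<dots> \<le> 0" using key ul by (intro divide_nonpos_pos) auto
    finally have "relu z - ?u / (?u - ?l) * z - - (?u * ?l) / (?u - ?l) \<le> 0" .
    then show ?thesis using 4 ul by (auto simp: Dentry_def bentry_def intro: mult_nonpos_nonpos)
  qed
qed

context
  fixes L :: nat and d :: "nat \<Rightarrow> nat"
    and W :: "nat \<Rightarrow> nat \<Rightarrow> nat \<Rightarrow> real" and b :: "nat \<Rightarrow> nat \<Rightarrow> real"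
    and Zp Zn :: "nat \<Rightarrow> nat set"
    and l u :: "nat \<Rightarrow> nat \<Rightarrow> real"
    and \<alpha> \<beta> :: "nat \<Rightarrow> nat \<Rightarrow> real"
    and x :: "nat \<Rightarrow> real"
begin

abbreviation "AA \<equiv> Arow L d W l u Zp Zn \<alpha> \<beta>"
abbreviation "DD \<equiv> Dmat L d W l u Zp Zn \<alpha> \<beta>"
abbreviation "BL \<equiv> blow L d W l u Zp Zn \<alpha> \<beta>"
abbreviation "SS \<equiv> Sdiag Zp Zn"
abbreviation "OM \<equiv> Omega L d W l u Zp Zn \<alpha> \<beta>"

fun pv :: "nat \<Rightarrow> nat \<Rightarrow> real" where
  "pv 0 = x"
| "pv (Suc i) = (\<lambda>j. DD (Suc i) j * ((\<Sum>k<d i. W (Suc i) j k * pv i k) + b (Suc i) j) + BL (Suc i) j)"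

definition yv :: "nat \<Rightarrow> nat \<Rightarrow> real" where
  "yv i j = (\<Sum>k<d (i - 1). W i j k * pv (i - 1) k) + b i j"

lemma pv_Suc: "pv (Suc i) j = DD (Suc i) j * yv (Suc i) j + BL (Suc i) j"
  by (simp add: yv_def)

definition Fx where "Fx k r = (\<Sum>m<d 1. OM k 1 r m * (\<Sum>j<d 0. W 1 m j * x j))"
definition Fb where "Fb k r = (\<Sum>i\<in>{1..k}. \<Sum>m<d i. OM k i r m * b i m)"
definition Fl where "Fl k r = (\<Sum>i\<in>{2..k}. \<Sum>m<d i. OM k i r m * (\<Sum>p<d (i - 1). W i m p * BL (i - 1) p))"

lemma OO_step: "i \<le> k \<Longrightarrow> OM (Suc k) i r m = (\<Sum>c<d k. W (Suc k) r c * (DD k c * OM k i c m))"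
proof -
  assume "i \<le> k"
  then have e: "Suc k - i = Suc (k - i)" "i + (k - i) = k" by auto
  show ?thesis unfolding Omega_def e(1) by (simp add: e(2) mult.assoc)
qed

lemma OO_id: "r < d k \<Longrightarrow> (\<Sum>m<d k. OM k k r m * t m) = t r"
proof -
  assume r: "r < d k"
  have "(\<Sum>m<d k. OM k k r m * t m) = (\<Sum>m<d k. if r = m then t m else 0)"
    by (rule sum.cong) (auto simp: Omega_def)
  also have "\<dots> = t r" using r by simp
  finally show ?thesis .
qed

lemma OO_step_sum: "i \<le> k \<Longrightarrow> (\<Sum>m<d i. OM (Suc k) i r m * t m) = (\<Sum>c<d k. W (Suc k) r c * DD k c * (\<Sum>m<d i. OM k i c m * t m))"
  by (simp add: OO_step swap_lem mult.assoc sum_distrib_left)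

lemma Fx_step: "1 \<le> k \<Longrightarrow> Fx (Suc k) r = (\<Sum>c<d k. W (Suc k) r c * DD k c * Fx k c)"
  unfolding Fx_def by (rule OO_step_sum) simp

lemma swap2: "(\<Sum>i\<in>I. \<Sum>c<N. (f c :: real) * g i c) = (\<Sum>c<N. f c * (\<Sum>i\<in>I. g i c))"
  by (simp add: sum_distrib_left sum.swap[of _ I])

lemma Fb_step: "r < d (Suc k) \<Longrightarrow> Fb (Suc k) r = (\<Sum>c<d k. W (Suc k) r c * DD k c * Fb k c) + b (Suc k) r"
proof -
  assume r: "r < d (Suc k)"
  have s: "{1..Suc k} = insert (Suc k) {1..k}" by auto
  have "Fb (Suc k) r = (\<Sum>i\<in>{1..k}. \<Sum>m<d i. OM (Suc k) i r m * b i m) + b (Suc k) r"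
    unfolding Fb_def s using r by (simp add: OO_id)
  also have "(\<Sum>i\<in>{1..k}. \<Sum>m<d i. OM (Suc k) i r m * b i m)
      = (\<Sum>i\<in>{1..k}. \<Sum>c<d k. W (Suc k) r c * DD k c * (\<Sum>m<d i. OM k i c m * b i m))"
    by (rule sum.cong[OF refl]) (simp add: OO_step_sum)
  also have "\<dots> = (\<Sum>c<d k. W (Suc k) r c * DD k c * Fb k c)"
    unfolding swap2 Fb_def ..
  finally show ?thesis .
qed

lemma Fl_step: "1 \<le> k \<Longrightarrow> r < d (Suc k) \<Longrightarrow> Fl (Suc k) r = (\<Sum>c<d k. W (Suc k) r c * DD k c * Fl k c) + (\<Sum>p<d k. W (Suc k) r p * BL k p)"
proof -
  assume k: "1 \<le> k" and r: "r < d (Suc k)"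
  have s: "{2..Suc k} = insert (Suc k) {2..k}" using k by auto
  have "Fl (Suc k) r = (\<Sum>i\<in>{2..k}. \<Sum>m<d i. OM (Suc k) i r m * (\<Sum>p<d (i - 1). W i m p * BL (i - 1) p)) + (\<Sum>p<d k. W (Suc k) r p * BL k p)"
    unfolding Fl_def s using r by (simp add: OO_id[where t = "\<lambda>m. \<Sum>p<d k. W (Suc k) m p * BL k p"])
  also have "(\<Sum>i\<in>{2..k}. \<Sum>m<d i. OM (Suc k) i r m * (\<Sum>p<d (i - 1). W i m p * BL (i - 1) p))
      = (\<Sum>i\<in>{2..k}. \<Sum>c<d k. W (Suc k) r c * DD k c * (\<Sum>m<d i. OM k i c m * (\<Sum>p<d (i - 1). W i m p * BL (i - 1) p)))"
    by (rule sum.cong[OF refl]) (simp add: OO_step_sum)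
  also have "\<dots> = (\<Sum>c<d k. W (Suc k) r c * DD k c * Fl k c)"
    unfolding swap2 Fl_def ..
  finally show ?thesis .
qed

lemma yv_closed: "1 \<le> k \<Longrightarrow> r < d k \<Longrightarrow> yv k r = Fx k r + Fb k r + Fl k r"
proof (induction k arbitrary: r rule: nat_induct_at_least)
  case base
  have "Fx 1 r = (\<Sum>c<d 0. W 1 r c * x c)" unfolding Fx_def using base by (simp add: OO_id)
  moreover have "Fb 1 r = b 1 r" unfolding Fb_def using base by (simp add: OO_id)
  moreover have "Fl 1 r = 0" unfolding Fl_def by simp
  ultimately show ?case by (simp add: yv_def)
next
  case (Suc k)
  obtain k' where k': "k = Suc k'" using Suc.hyps by (cases k) auto
  have "yv (Suc k) r = (\<Sum>c<d k. W (Suc k) r c * (DD k c * yv k c + BL k c)) + b (Suc k) r"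
    by (simp add: yv_def k' pv_Suc)
  also have "\<dots> = (\<Sum>c<d k. W (Suc k) r c * DD k c * (Fx k c + Fb k c + Fl k c)) + (\<Sum>c<d k. W (Suc k) r c * BL k c) + b (Suc k) r"
    by (simp add: Suc.IH algebra_simps sum.distrib)
  also have "\<dots> = Fx (Suc k) r + Fb (Suc k) r + Fl (Suc k) r"
    using Suc by (simp add: Fx_step Fb_step Fl_step algebra_simps sum.distrib)
  finally show ?case .
qed

lemma bound_obj_eq:
  "bound_obj L d W b l u Zp Zn \<alpha> \<beta> x = (Fx L 0 + Fb L 0 + Fl L 0)
     + (\<Sum>i\<in>{1..L-1}. \<Sum>r<d i. \<beta> i r * SS i r * (Fx i r + Fb i r + Fl i r))"
proof -
  have 1: "(\<Sum>j<d 0. avec L d W l u Zp Zn \<alpha> \<beta> j * x j) = Fx L 0"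
    unfolding avec_def Fx_def by (rule swap_lem)
  have 2: "(\<Sum>j<d 0. Pbeta L d W l u Zp Zn \<alpha> \<beta> j * x j) = (\<Sum>i\<in>{1..L-1}. \<Sum>r<d i. \<beta> i r * SS i r * Fx i r)"
  proof -
    have "(\<Sum>j<d 0. Pbeta L d W l u Zp Zn \<alpha> \<beta> j * x j)
       = (\<Sum>j<d 0. \<Sum>i\<in>{1..L-1}. \<Sum>r<d i. \<beta> i r * SS i r * ((\<Sum>m<d 1. OM i 1 r m * W 1 m j) * x j))"
      unfolding Pbeta_def Pblock_def by (simp add: sum_distrib_right sum_distrib_left mult_ac)
    also have "\<dots> = (\<Sum>i\<in>{1..L-1}. \<Sum>r<d i. \<beta> i r * SS i r * (\<Sum>j<d 0. (\<Sum>m<d 1. OM i 1 r m * W 1 m j) * x j))"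
      by (simp add: sum.swap[of _ "{..<d 0}"] sum_distrib_left)
    also have "\<dots> = (\<Sum>i\<in>{1..L-1}. \<Sum>r<d i. \<beta> i r * SS i r * Fx i r)"
      unfolding Fx_def swap_lem ..
    finally show ?thesis .
  qed
  have 3: "cconst L d W b l u Zp Zn \<alpha> \<beta> = Fb L 0 + Fl L 0"
    unfolding cconst_def Fb_def Fl_def ..
  have 4: "qbeta L d W b l u Zp Zn \<alpha> \<beta> = (\<Sum>i\<in>{1..L-1}. \<Sum>r<d i. \<beta> i r * SS i r * (Fb i r + Fl i r))"
    unfolding qbeta_def qblock_def Fb_def Fl_def
    by (simp add: sum_distrib_left algebra_simps)
  have 5: "(\<Sum>j<d 0. (avec L d W l u Zp Zn \<alpha> \<beta> j + Pbeta L d W l u Zp Zn \<alpha> \<beta> j) * x j)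
     = Fx L 0 + (\<Sum>i\<in>{1..L-1}. \<Sum>r<d i. \<beta> i r * SS i r * Fx i r)"
    unfolding 1[symmetric] 2[symmetric] by (simp add: distrib_right sum.distrib)
  show ?thesis unfolding bound_obj_def 5 3 4
    by (simp add: algebra_simps sum.distrib)
qed

definition "ee i j = zpre d W b i x j - yv i j"
definition "rr k j = zhat d W b k x j - DD k j * zpre d W b k x j - BL k j"
definition "gg i j = AA i j * DD i j + \<beta> i j * SS i j"

lemma zhat_Suc: "zhat d W b (Suc i) x j = relu (zpre d W b (Suc i) x j)"
  by (simp add: zpre_def)

lemma ee_1: "ee (Suc 0) j = 0"
  by (simp add: ee_def zpre_def yv_def)

lemma ee_Suc: "1 \<le> i \<Longrightarrow> ee (Suc i) j = (\<Sum>c<d i. W (Suc i) j c * (rr i c + DD i c * ee i c))"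
proof -
  assume i: "1 \<le> i"
  then obtain i' where i': "i = Suc i'" by (cases i) auto
  have "ee (Suc i) j = (\<Sum>c<d i. W (Suc i) j c * (zhat d W b i x c - pv i c))"
    by (simp add: ee_def zpre_def yv_def sum_subtractf right_diff_distrib)
  also have "\<dots> = (\<Sum>c<d i. W (Suc i) j c * (rr i c + DD i c * ee i c))"
    by (rule sum.cong[OF refl]) (simp add: i' pv_Suc rr_def ee_def yv_def algebra_simps)
  finally show ?thesis .
qed

lemma step_lem:
  assumes "1 \<le> i" "\<forall>c<d i. AA i c = (\<Sum>j<d (Suc i). G j * W (Suc i) j c)"
  shows "(\<Sum>j<d (Suc i). G j * ee (Suc i) j) = (\<Sum>c<d i. AA i c * rr i c) + (\<Sum>c<d i. AA i c * DD i c * ee i c)"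
proof -
  have "(\<Sum>j<d (Suc i). G j * ee (Suc i) j) = (\<Sum>j<d (Suc i). G j * (\<Sum>c<d i. W (Suc i) j c * (rr i c + DD i c * ee i c)))"
    using assms(1) by (simp add: ee_Suc)
  also have "\<dots> = (\<Sum>c<d i. (\<Sum>j<d (Suc i). G j * W (Suc i) j c) * (rr i c + DD i c * ee i c))"
    by (rule swap_lem[symmetric])
  also have "\<dots> = (\<Sum>c<d i. AA i c * (rr i c + DD i c * ee i c))"
    using assms(2) by simp
  also have "\<dots> = (\<Sum>c<d i. AA i c * rr i c) + (\<Sum>c<d i. AA i c * DD i c * ee i c)"
    by (simp add: algebra_simps sum.distrib)
  finally show ?thesis .
qed

lemma A_rec: "Suc i \<le> L - 1 \<Longrightarrow> AA i c = (\<Sum>j<d (Suc i). gg (Suc i) j * W (Suc i) j c)"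
proof -
  assume h: "Suc i \<le> L - 1"
  have e: "L - 1 - i = Suc (L - Suc (Suc i))" "L - Suc (L - Suc (Suc i)) = Suc i" using h by auto
  show ?thesis unfolding Arow_def e(1) gg_def Dmat_def Atop.simps
    by (simp add: e(2) Arow_def)
qed

lemma A_top: "L = Suc i \<Longrightarrow> d (Suc i) = 1 \<Longrightarrow> AA i c = (\<Sum>j<d (Suc i). (if j = 0 then 1 else 0) * W (Suc i) j c)"
proof -
  assume h: "L = Suc i" "d (Suc i) = 1"
  have e: "L - 1 - i = 0" using h by simp
  show ?thesis unfolding Arow_def e Atop.simps using h by simp
qed

lemma tele: "1 \<le> i \<Longrightarrow> i \<le> L - 1 \<Longrightarrow> (\<Sum>j<d i. gg i j * ee i j) =
   (\<Sum>k\<in>{1..<i}. (\<Sum>c<d k. AA k c * rr k c) - (\<Sum>c<d k. \<beta> k c * SS k c * ee k c))"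
proof (induction i rule: nat_induct_at_least)
  case base
  then show ?case by (simp add: ee_1)
next
  case (Suc i)
  have "(\<Sum>j<d (Suc i). gg (Suc i) j * ee (Suc i) j) = (\<Sum>c<d i. AA i c * rr i c) + (\<Sum>c<d i. AA i c * DD i c * ee i c)"
    using Suc by (intro step_lem) (auto simp: A_rec)
  also have "(\<Sum>c<d i. AA i c * DD i c * ee i c) = (\<Sum>c<d i. gg i c * ee i c) - (\<Sum>c<d i. \<beta> i c * SS i c * ee i c)"
    by (simp add: gg_def algebra_simps sum_subtractf[symmetric])
  finally show ?case using Suc by simp
qed

lemma final: "1 \<le> L \<Longrightarrow> d L = 1 \<Longrightarrow> ee L 0 =
   (\<Sum>k\<in>{1..<L}. (\<Sum>c<d k. AA k c * rr k c) - (\<Sum>c<d k. \<beta> k c * SS k c * ee k c))"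
proof -
  assume L: "1 \<le> L" and dL: "d L = 1"
  show ?thesis
  proof (cases "L = 1")
    case True
    then have L1: "L = Suc 0" by simp
    have "ee L 0 = ee (Suc 0) 0" using L1 by (rule arg_cong[where f="\<lambda>t. ee t 0"])
    moreover have "{1..<L} = {}" using L1 by simp
    ultimately show ?thesis by (simp only: ee_1 sum.empty)
  next
    case False
    obtain i where i: "1 \<le> i" "L = Suc i" using L False by (cases L) auto
    have dS: "d (Suc i) = 1" using dL i(2) by simp
    have "ee L 0 = ee (Suc i) 0" using i(2) by (rule arg_cong[where f="\<lambda>t. ee t 0"])
    also have "\<dots> = (\<Sum>j<d (Suc i). (if j = 0 then 1 else 0) * ee (Suc i) j)" using dS by simp
    also have "\<dots> = (\<Sum>c<d i. AA i c * rr i c) + (\<Sum>c<d i. AA i c * DD i c * ee i c)"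
      by (intro step_lem i(1) allI impI A_top[OF i(2) dS])
    also have "(\<Sum>c<d i. AA i c * DD i c * ee i c) = (\<Sum>c<d i. gg i c * ee i c) - (\<Sum>c<d i. \<beta> i c * SS i c * ee i c)"
      by (simp add: gg_def algebra_simps sum_subtractf[symmetric])
    also have "(\<Sum>c<d i. gg i c * ee i c) = (\<Sum>k\<in>{1..<i}. (\<Sum>c<d k. AA k c * rr k c) - (\<Sum>c<d k. \<beta> k c * SS k c * ee k c))"
      using i by (intro tele) auto
    finally have *: "ee L 0 = (\<Sum>c<d i. AA i c * rr i c) + ((\<Sum>k\<in>{1..<i}. (\<Sum>c<d k. AA k c * rr k c) - (\<Sum>c<d k. \<beta> k c * SS k c * ee k c)) - (\<Sum>c<d i. \<beta> i c * SS i c * ee i c))" .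
    have s: "{1..<L} = insert i {1..<i}" using i by auto
    show ?thesis unfolding s * by simp
  qed
qed

lemma pointwise:
  assumes L: "L \<ge> 1" and dL: "d L = 1"
    and sp: "split_sat L d W b Zp Zn x"
    and bnd: "\<forall>i\<in>{1..L}. \<forall>j<d i. l i j \<le> zpre d W b i x j \<and> zpre d W b i x j \<le> u i j"
    and al: "\<forall>i\<in>{1..L-1}. \<forall>j<d i. 0 \<le> \<alpha> i j \<and> \<alpha> i j \<le> 1"
    and be: "\<forall>i\<in>{1..L-1}. \<forall>j<d i. 0 \<le> \<beta> i j"
  shows "bound_obj L d W b l u Zp Zn \<alpha> \<beta> x \<le> net_out L d W b x"
proof -
  have I: "{1..L-1} = {1..<L}" by auto
  have bo: "bound_obj L d W b l u Zp Zn \<alpha> \<beta> x = yv L 0 + (\<Sum>i\<in>{1..<L}. \<Sum>r<d i. \<beta> i r * SS i r * (zpre d W b i x r - ee i r))"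
  proof -
    have "yv L 0 = Fx L 0 + Fb L 0 + Fl L 0" using L dL by (intro yv_closed) auto
    moreover have "(\<Sum>i\<in>{1..<L}. \<Sum>r<d i. \<beta> i r * SS i r * (zpre d W b i x r - ee i r))
       = (\<Sum>i\<in>{1..<L}. \<Sum>r<d i. \<beta> i r * SS i r * (Fx i r + Fb i r + Fl i r))"
      by (intro sum.cong refl) (simp add: ee_def yv_closed)
    ultimately show ?thesis unfolding bound_obj_eq I by simp
  qed
  have no: "net_out L d W b x = yv L 0 + ee L 0" by (simp add: net_out_def ee_def)
  have fin: "ee L 0 = (\<Sum>k\<in>{1..<L}. (\<Sum>c<d k. AA k c * rr k c) - (\<Sum>c<d k. \<beta> k c * SS k c * ee k c))"
    using L dL by (rule final)
  have r0: "0 \<le> AA k c * rr k c" if k: "k \<in> {1..<L}" and c: "c < d k" for k c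
  proof -
    obtain k' where k': "k = Suc k'" using k by (cases k) auto
    have zh: "zhat d W b k x c = relu (zpre d W b k x c)" unfolding k' by (rule zhat_Suc)
    have kk: "k \<in> {1..L}" "k \<in> {1..L-1}" using k by auto
    have spk: "(\<forall>j\<in>Zp k. zpre d W b k x j \<ge> 0) \<and> (\<forall>j\<in>Zn k. zpre d W b k x j < 0)"
      using sp kk(2) unfolding split_sat_def by blast
    have "0 \<le> AA k c * (relu (zpre d W b k x c) - Dentry l u Zp Zn \<alpha> k (AA k c) c * zpre d W b k x c - bentry l u Zp Zn k (AA k c) c)"
      apply (rule relax)
      using bnd kk c spk al by auto
    then show ?thesis by (simp add: rr_def zh Dmat_def blow_def)
  qed
  have s0: "\<beta> k c * SS k c * zpre d W b k x c \<le> 0" if k: "k \<in> {1..<L}" and c: "c < d k" for k c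
  proof -
    have kk: "k \<in> {1..L-1}" using k by auto
    have spk: "(\<forall>j\<in>Zp k. zpre d W b k x j \<ge> 0) \<and> (\<forall>j\<in>Zn k. zpre d W b k x j < 0)"
      using sp kk unfolding split_sat_def by blast
    have b0: "0 \<le> \<beta> k c" using be kk c by auto
    have "SS k c * zpre d W b k x c \<le> 0" using spk by (auto simp: Sdiag_def)
    then show ?thesis using b0 by (simp add: mult.assoc mult_nonneg_nonpos)
  qed
  have R: "0 \<le> (\<Sum>k\<in>{1..<L}. \<Sum>c<d k. AA k c * rr k c)"
    using r0 by (intro sum_nonneg) auto
  have Sz: "(\<Sum>k\<in>{1..<L}. \<Sum>c<d k. \<beta> k c * SS k c * zpre d W b k x c) \<le> 0"
    using s0 by (intro sum_nonpos) auto
  have "net_out L d W b x - bound_obj L d W b l u Zp Zn \<alpha> \<beta> x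
     = (\<Sum>k\<in>{1..<L}. \<Sum>c<d k. AA k c * rr k c) - (\<Sum>k\<in>{1..<L}. \<Sum>c<d k. \<beta> k c * SS k c * zpre d W b k x c)"
    unfolding no bo fin by (simp add: sum_subtractf right_diff_distrib algebra_simps)
  then show ?thesis using R Sz by linarith
qed

end


theorem theorem1:
  fixes L :: nat and d :: "nat \<Rightarrow> nat"
    and W :: "nat \<Rightarrow> nat \<Rightarrow> nat \<Rightarrow> real" and b :: "nat \<Rightarrow> nat \<Rightarrow> real"
    and C :: "(nat \<Rightarrow> real) set"
    and Zp Zn :: "nat \<Rightarrow> nat set"
    and l u :: "nat \<Rightarrow> nat \<Rightarrow> real"
    and \<alpha> \<beta> :: "nat \<Rightarrow> nat \<Rightarrow> real"
  assumes "L \<ge> 1" and "d L = 1"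
    and "\<forall>i\<in>{1..L-1}. Zp i \<subseteq> {..<d i} \<and> Zn i \<subseteq> {..<d i} \<and> Zp i \<inter> Zn i = {}"
    and "\<forall>x\<in>C. split_sat L d W b Zp Zn x \<longrightarrow>
           (\<forall>i\<in>{1..L}. \<forall>j<d i. l i j \<le> zpre d W b i x j \<and> zpre d W b i x j \<le> u i j)"
    and "\<forall>i\<in>{1..L-1}. \<forall>j<d i. 0 \<le> \<alpha> i j \<and> \<alpha> i j \<le> 1"
    and "\<forall>i\<in>{1..L-1}. \<forall>j<d i. 0 \<le> \<beta> i j"
  shows "(INF x\<in>C. ereal (bound_obj L d W b l u Zp Zn \<alpha> \<beta> x))
           \<le> (INF x\<in>{x\<in>C. split_sat L d W b Zp Zn x}. ereal (net_out L d W b x))"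
proof (rule INF_greatest)
  fix x assume x: "x \<in> {x\<in>C. split_sat L d W b Zp Zn x}"
  have "bound_obj L d W b l u Zp Zn \<alpha> \<beta> x \<le> net_out L d W b x"
    using x assms by (intro pointwise) auto
  then show "(INF x\<in>C. ereal (bound_obj L d W b l u Zp Zn \<alpha> \<beta> x)) \<le> ereal (net_out L d W b x)"
    using x by (intro INF_lower2[of x]) auto
qed

end
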